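(* Let $\tau$ be a row-standard tableau with $\tau\in D_i$, and let $j$ be the entry in the box immediately above $i$. Then $n_{\mathrm{inv}}(\delta_i(\tau))=n_{\mathrm{inv}}(\tau)-1$ if $(\min(i,j),\max(i,j))$ is an inversion of $\tau$, and $n_{\mathrm{inv}}(\delta_i(\tau))=n_{\mathrm{inv}}(\tau)+1$ otherwise.
   Context: Fix a Young diagram $Y$ with $n$ boxes (rows drawn top to bottom, left-justified). A row-standard tableau of shape $Y$ is a bijective numbering of its boxes by $1,\dots,n$ increasing left to right along rows; it is standard if also increasing top to bottom along columns. An inversion of a row-standard $\tau$ is a pair $i<j$ in the same column such that either (i) $i$ or $j$ has no box immediately to its right and $i$ is below $j$, or (ii) $i,j$ have right neighbours $i',j'$ with $i'>j'$; $n_{\mathrm{inv}}(\tau)$ is their number. For $i\in\{1,\dots,n\}$, $D_i$ is the set of row-standard tableaux $\tau$ such that: (1) $i$ is not in the first row, and letting $j$ be the entry immediately above $i$: (2) if $i$ has a right neighbour $i'$ then $j<i'$, and if $j$ has a right neighbour $j'$ then $i<j'$; (3) for every $k$ in the same column as $i,j$ with $\min(i,j)<k<\max(i,j)$, exactly one of $(\min(i,j),k)$ and $(k,\max(i,j))$ is an inversion. For $\tau\in D_i$, if $i_1<\dots<i_q=i$ are the entries of the row of $i$ up to $i$ and $j_1<\dots<j_q=j$ those of the row of $j$ up to $j$, then $\delta_i(\tau)$ is the row-standard tableau obtained by swapping $i_k$ and $j_k$ for every $k=1,\dots,q$. *)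

theory Defs
  imports Main
begin

text \<open>A Young diagram is given by its list of row lengths (top row first),
  weakly decreasing and positive. Boxes are pairs (row, column), 0-indexed,
  rows counted from the top.\<close>

definition young_diagram :: "nat list \<Rightarrow> bool" where
  "young_diagram Y \<longleftrightarrow> 0 \<notin> set Y \<and> (\<forall>k. Suc k < length Y \<longrightarrow> Y ! Suc k \<le> Y ! k)"

definition boxes :: "nat list \<Rightarrow> (nat \<times> nat) set" where
  "boxes Y = {(r, c). r < length Y \<and> c < Y ! r}"

text \<open>A tableau is a function on boxes; values outside the boxes are irrelevant.\<close>

definition row_standard :: "nat list \<Rightarrow> (nat \<times> nat \<Rightarrow> nat) \<Rightarrow> bool" where
  "row_standard Y \<tau> \<longleftrightarrow>
     bij_betw \<tau> (boxes Y) {1..sum_list Y} \<and>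
     (\<forall>r c. (r, Suc c) \<in> boxes Y \<longrightarrow> \<tau> (r, c) < \<tau> (r, Suc c))"

definition is_inversion :: "nat list \<Rightarrow> (nat \<times> nat \<Rightarrow> nat) \<Rightarrow> nat \<Rightarrow> nat \<Rightarrow> bool" where
  "is_inversion Y \<tau> a b \<longleftrightarrow> a < b \<and>
     (\<exists>r1 r2 c. (r1, c) \<in> boxes Y \<and> (r2, c) \<in> boxes Y \<and> \<tau> (r1, c) = a \<and> \<tau> (r2, c) = b \<and>
       (((r1, Suc c) \<notin> boxes Y \<or> (r2, Suc c) \<notin> boxes Y) \<and> r2 < r1
        \<or> (r1, Suc c) \<in> boxes Y \<and> (r2, Suc c) \<in> boxes Y \<and> \<tau> (r2, Suc c) < \<tau> (r1, Suc c)))"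

definition n_inv :: "nat list \<Rightarrow> (nat \<times> nat \<Rightarrow> nat) \<Rightarrow> nat" where
  "n_inv Y \<tau> = card {(a, b). is_inversion Y \<tau> a b}"

definition box_of :: "nat list \<Rightarrow> (nat \<times> nat \<Rightarrow> nat) \<Rightarrow> nat \<Rightarrow> nat \<times> nat" where
  "box_of Y \<tau> i = (THE b. b \<in> boxes Y \<and> \<tau> b = i)"

definition in_D :: "nat list \<Rightarrow> nat \<Rightarrow> (nat \<times> nat \<Rightarrow> nat) \<Rightarrow> bool" where
  "in_D Y i \<tau> \<longleftrightarrow> row_standard Y \<tau> \<and> i \<in> {1..sum_list Y} \<and>
     (\<exists>r c. (r, c) \<in> boxes Y \<and> \<tau> (r, c) = i \<and> 0 < r \<and>
        (let j = \<tau> (r - 1, c) in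
          ((r, Suc c) \<in> boxes Y \<longrightarrow> j < \<tau> (r, Suc c)) \<and>
          ((r - 1, Suc c) \<in> boxes Y \<longrightarrow> i < \<tau> (r - 1, Suc c)) \<and>
          (\<forall>r'. (r', c) \<in> boxes Y \<longrightarrow>
             (let k = \<tau> (r', c) in min i j < k \<and> k < max i j \<longrightarrow>
               (is_inversion Y \<tau> (min i j) k \<noteq> is_inversion Y \<tau> k (max i j))))))"

definition delta :: "nat list \<Rightarrow> nat \<Rightarrow> (nat \<times> nat \<Rightarrow> nat) \<Rightarrow> (nat \<times> nat \<Rightarrow> nat)" where
  "delta Y i \<tau> = (case box_of Y \<tau> i of (r, c) \<Rightarrow>
     (\<lambda>(a, b). if a = r \<and> b \<le> c then \<tau> (r - 1, b)
               else if a = r - 1 \<and> b \<le> c then \<tau> (r, b)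
               else \<tau> (a, b)))"

end

theory Submission imports Defs begin

definition pinv :: "nat \<Rightarrow> nat \<Rightarrow> bool \<Rightarrow> nat \<Rightarrow> nat \<Rightarrow> nat \<Rightarrow> bool \<Rightarrow> nat \<Rightarrow> bool" where
  "pinv vx rx nx wx vy ry ny wy \<longleftrightarrow> vx < vy \<and> ((\<not> nx \<or> \<not> ny) \<and> ry < rx \<or> nx \<and> ny \<and> wy < wx)"

definition ind :: "bool \<Rightarrow> nat" where "ind b = (if b then 1 else 0)"

definition succ :: "nat \<times> nat \<Rightarrow> nat \<times> nat" where "succ x = (fst x, Suc (snd x))"

definition BP :: "nat list \<Rightarrow> (nat \<times> nat \<Rightarrow> nat) \<Rightarrow> nat \<times> nat \<Rightarrow> nat \<times> nat \<Rightarrow> bool" where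
  "BP Y t x y \<longleftrightarrow> x \<in> boxes Y \<and> y \<in> boxes Y \<and> snd x = snd y \<and>
     pinv (t x) (fst x) (succ x \<in> boxes Y) (t (succ x)) (t y) (fst y) (succ y \<in> boxes Y) (t (succ y))"

lemma inv_ex: "is_inversion Y t a b \<longleftrightarrow> (\<exists>x y. BP Y t x y \<and> t x = a \<and> t y = b)"
  unfolding is_inversion_def BP_def pinv_def succ_def
  apply (rule iffI)
   apply clarsimp
   apply (metis fst_conv snd_conv)
  apply clarsimp
  apply (metis prod.collapse)
  done

lemma inv_box: assumes "inj_on t (boxes Y)" "x \<in> boxes Y" "y \<in> boxes Y"
  shows "is_inversion Y t (t x) (t y) \<longleftrightarrow> BP Y t x y"
proof
  assume "is_inversion Y t (t x) (t y)"
  then obtain x' y' where b: "BP Y t x' y'" "t x' = t x" "t y' = t y" unfolding inv_ex by blast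
  then have "x' \<in> boxes Y" "y' \<in> boxes Y" by (auto simp: BP_def)
  with b assms have "x' = x" "y' = y" by (auto simp: inj_on_def)
  with b show "BP Y t x y" by simp
next
  assume "BP Y t x y" then show "is_inversion Y t (t x) (t y)" unfolding inv_ex by blast
qed

lemma ninv_sum: assumes "inj_on t (boxes Y)" "finite (boxes Y)"
  shows "n_inv Y t = (\<Sum>x\<in>boxes Y. \<Sum>y\<in>boxes Y. ind (BP Y t x y))"
proof -
  have e: "{p \<in> boxes Y \<times> boxes Y. BP Y t (fst p) (snd p)} = {(x,y). BP Y t x y}"
    by (auto simp: BP_def)
  have "{(a, b). is_inversion Y t a b} = (\<lambda>(x,y). (t x, t y)) ` {p \<in> boxes Y \<times> boxes Y. BP Y t (fst p) (snd p)}"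
    unfolding inv_ex e by (auto simp: image_iff)
  moreover have "inj_on (\<lambda>(x,y). (t x, t y)) {p \<in> boxes Y \<times> boxes Y. BP Y t (fst p) (snd p)}"
    using assms(1) by (auto simp: inj_on_def)
  ultimately have "n_inv Y t = card {p \<in> boxes Y \<times> boxes Y. BP Y t (fst p) (snd p)}"
    unfolding n_inv_def by (simp add: card_image)
  also have "\<dots> = (\<Sum>p\<in>boxes Y \<times> boxes Y. ind (BP Y t (fst p) (snd p)))"
    using assms(2) by (simp add: ind_def sum.If_cases Int_def)
  also have "\<dots> = (\<Sum>x\<in>boxes Y. \<Sum>y\<in>boxes Y. ind (BP Y t x y))"
    by (simp add: sum.cartesian_product case_prod_beta)
  finally show ?thesis .
qed

lemma sum_split:
  fixes f :: "'a \<Rightarrow> 'a \<Rightarrow> nat"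
  assumes "finite S" "a \<in> S" "b \<in> S" "a \<noteq> b"
  shows "(\<Sum>x\<in>S. \<Sum>y\<in>S. f x y) = (\<Sum>x\<in>S - {a,b}. \<Sum>y\<in>S - {a,b}. f x y)
     + (\<Sum>x\<in>S - {a,b}. f x a + f x b + f a x + f b x) + (f a a + f a b + f b a + f b b)"
proof -
  have g: "sum g S = g a + g b + sum g (S - {a,b})" for g :: "'a \<Rightarrow> nat"
  proof -
    have S: "S = insert a (insert b (S - {a,b}))" using assms by auto
    have "sum g S = sum g (insert a (insert b (S - {a,b})))" using S by simp
    also have "\<dots> = g a + g b + sum g (S - {a,b})" using assms by simp
    finally show ?thesis .
  qed
  show ?thesis
    by (simp only: g sum.distrib)
qed
lemma pair_flip:
  assumes "(0::nat) < r" "i \<noteq> j" "nB \<longrightarrow> nA" "nA \<and> nB \<longrightarrow> a' \<noteq> b'"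
  shows "ind (pinv i (r-1) nA a' j r nB b') + ind (pinv j r nB b' i (r-1) nA a')
       + (ind (pinv j (r-1) nA a' i r nB b') + ind (pinv i r nB b' j (r-1) nA a')) = 1"
  using assms unfolding pinv_def ind_def by auto

lemma per_z:
  assumes "(0::nat) < r" "\<rho> \<noteq> r" "\<rho> \<noteq> r - 1" "i \<noteq> j" "k \<noteq> i" "k \<noteq> j" "nB \<longrightarrow> nA"
    "nA \<and> nB \<longrightarrow> a' \<noteq> b'" "nA \<and> nz \<longrightarrow> a' \<noteq> k'" "nB \<and> nz \<longrightarrow> b' \<noteq> k'"
    "i < j \<Longrightarrow> i < k \<Longrightarrow> k < j \<Longrightarrow> pinv i r nB b' k \<rho> nz k' \<noteq> pinv k \<rho> nz k' j (r-1) nA a'"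
    "j < i \<Longrightarrow> j < k \<Longrightarrow> k < i \<Longrightarrow> pinv j (r-1) nA a' k \<rho> nz k' \<noteq> pinv k \<rho> nz k' i r nB b'"
  shows "ind (pinv k \<rho> nz k' i (r-1) nA a') + ind (pinv k \<rho> nz k' j r nB b')
       + ind (pinv i (r-1) nA a' k \<rho> nz k') + ind (pinv j r nB b' k \<rho> nz k')
       = ind (pinv k \<rho> nz k' j (r-1) nA a') + ind (pinv k \<rho> nz k' i r nB b')
       + ind (pinv j (r-1) nA a' k \<rho> nz k') + ind (pinv i r nB b' k \<rho> nz k')"
  using assms unfolding pinv_def ind_def by (cases nA; cases nB; cases nz) (auto split: if_splits)

theorem lemma2p1:
  fixes Y :: "nat list" and \<tau> :: "nat \<times> nat \<Rightarrow> nat" and i r c :: nat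
  assumes "young_diagram Y"
    and "in_D Y i \<tau>"
    and "(r, c) \<in> boxes Y" and "\<tau> (r, c) = i"
  shows "int (n_inv Y (delta Y i \<tau>)) =
           (if is_inversion Y \<tau> (min i (\<tau> (r - 1, c))) (max i (\<tau> (r - 1, c)))
            then int (n_inv Y \<tau>) - 1 else int (n_inv Y \<tau>) + 1)"
proof -
  define B where "B = boxes Y"
  define j where "j = \<tau> (r - 1, c)"
  have rs: "row_standard Y \<tau>" using assms(2) by (simp add: in_D_def)
  then have bij: "bij_betw \<tau> B {1..sum_list Y}" by (simp add: row_standard_def B_def)
  then have inj: "inj_on \<tau> B" by (simp add: bij_betw_def)
  have fin: "finite B" using bij bij_betw_finite by blast
  obtain r0 c0 where rc0: "(r0, c0) \<in> B" "\<tau> (r0, c0) = i" "0 < r0"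
    and c3: "\<forall>r'. (r', c0) \<in> B \<longrightarrow>
             (let k = \<tau> (r', c0) in min i (\<tau> (r0 - 1, c0)) < k \<and> k < max i (\<tau> (r0 - 1, c0)) \<longrightarrow>
               (is_inversion Y \<tau> (min i (\<tau> (r0 - 1, c0))) k \<noteq> is_inversion Y \<tau> k (max i (\<tau> (r0 - 1, c0)))))"
    using assms(2) unfolding in_D_def Let_def B_def by blast
  have "(r0, c0) = (r, c)" using inj rc0 assms(3,4) unfolding B_def inj_on_def by metis
  then have [simp]: "r0 = r" "c0 = c" by auto
  have r0: "0 < r" using rc0 by simp
  have c3': "(r', c) \<in> B \<Longrightarrow> min i j < \<tau> (r', c) \<Longrightarrow> \<tau> (r', c) < max i j \<Longrightarrow>
     is_inversion Y \<tau> (min i j) (\<tau> (r', c)) \<noteq> is_inversion Y \<tau> (\<tau> (r', c)) (max i j)" for r'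
    using c3 unfolding j_def Let_def by simp
  have Bb: "(r, c) \<in> B" using assms(3) B_def by simp
  have rlen: "r < length Y" "c < Y ! r" using Bb by (auto simp: B_def boxes_def)
  have yl: "Y ! r \<le> Y ! (r - 1)"
    using assms(1) r0 rlen unfolding young_diagram_def by (metis Suc_pred' less_imp_diff_less)
  have A: "(r - 1, c) \<in> B" using rlen yl by (auto simp: B_def boxes_def)
  have inB: "(a, b) \<in> B \<longleftrightarrow> a < length Y \<and> b < Y ! a" for a b by (simp add: B_def boxes_def)
  have box: "box_of Y \<tau> i = (r, c)"
    unfolding box_of_def
    using inj Bb assms(4) unfolding B_def inj_on_def by (metis (mono_tags, lifting) the_equality)
  define \<sigma> :: "nat \<times> nat \<Rightarrow> nat \<times> nat" where
    "\<sigma> p = (if fst p = r \<and> snd p \<le> c then (r - 1, snd p) else if fst p = r - 1 \<and> snd p \<le> c then (r, snd p) else p)" for p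
  have dl: "delta Y i \<tau> = (\<lambda>p. \<tau> (\<sigma> p))"
    by (rule ext) (auto simp: delta_def box \<sigma>_def split: prod.splits)
  have s_inv: "\<sigma> (\<sigma> p) = p" for p using r0 by (cases p) (auto simp: \<sigma>_def)
  have s_B: "p \<in> B \<Longrightarrow> \<sigma> p \<in> B" for p
    using rlen yl r0 by (cases p) (auto simp: \<sigma>_def inB)
  have s_Biff: "\<sigma> p \<in> B \<longleftrightarrow> p \<in> B" for p using s_B s_inv by metis
  have s_snd: "snd (\<sigma> p) = snd p" for p by (simp add: \<sigma>_def)
  have s_A: "\<sigma> (r - 1, c) = (r, c)" "\<sigma> (r, c) = (r - 1, c)" using r0 by (auto simp: \<sigma>_def)
  have s_succ: "p \<noteq> (r - 1, c) \<Longrightarrow> p \<noteq> (r, c) \<Longrightarrow> \<sigma> (succ p) = succ (\<sigma> p)" for p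
    by (cases p) (auto simp: \<sigma>_def succ_def)
  define B' where "B' = B - {(r - 1, c), (r, c)}"
  have AB: "(r - 1, c) \<noteq> (r, c)" using r0 by simp
  have s_bij: "bij_betw \<sigma> B' B'"
  proof (rule bij_betw_byWitness[where f'=\<sigma>])
    have "\<sigma> ` B' \<subseteq> B'"
    proof
      fix q assume "q \<in> \<sigma> ` B'"
      then obtain p where p: "p \<in> B'" "q = \<sigma> p" by blast
      have "q \<in> B" using p s_B B'_def by auto
      moreover have "q \<noteq> (r - 1, c)" using p s_inv s_A B'_def by (metis DiffD2 insertI2 singletonI)
      moreover have "q \<noteq> (r, c)" using p s_inv s_A B'_def by (metis DiffD2 insertI1)
      ultimately show "q \<in> B'" by (simp add: B'_def)
    qed
    then show "\<sigma> ` B' \<subseteq> B'" "\<sigma> ` B' \<subseteq> B'" by auto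
  qed (use s_inv in auto)
  have s_row: "fst y < fst x \<longleftrightarrow> fst (\<sigma> y) < fst (\<sigma> x)"
    if "x \<in> B'" "y \<in> B'" "snd x = snd y" "succ x \<notin> B \<or> succ y \<notin> B" for x y
    using that rlen yl r0 by (cases x; cases y) (auto simp: \<sigma>_def succ_def inB B'_def)
  have pw: "BP Y (\<lambda>p. \<tau> (\<sigma> p)) x y \<longleftrightarrow> BP Y \<tau> (\<sigma> x) (\<sigma> y)" if xy: "x \<in> B'" "y \<in> B'" for x y
  proof -
    have nx: "x \<noteq> (r - 1, c)" "x \<noteq> (r, c)" "y \<noteq> (r - 1, c)" "y \<noteq> (r, c)" using xy by (auto simp: B'_def)
    have e1: "\<sigma> (succ x) = succ (\<sigma> x)" "\<sigma> (succ y) = succ (\<sigma> y)" using s_succ nx by auto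
    have e2: "succ (\<sigma> x) \<in> B \<longleftrightarrow> succ x \<in> B" "succ (\<sigma> y) \<in> B \<longleftrightarrow> succ y \<in> B"
      using s_Biff e1 by metis+
    have e3: "x \<in> B" "y \<in> B" "\<sigma> x \<in> B" "\<sigma> y \<in> B" using xy s_B by (auto simp: B'_def)
    show ?thesis
      unfolding BP_def B_def[symmetric] e1 e2 s_snd pinv_def
      using e3 s_row[OF xy] by auto
  qed
  define \<delta> where "\<delta> = (\<lambda>p. \<tau> (\<sigma> p))"
  have BPeq: "BP Y t p q \<longleftrightarrow> pinv (t p) (fst p) (succ p \<in> B) (t (succ p)) (t q) (fst q) (succ q \<in> B) (t (succ q))"
    if "p \<in> B" "q \<in> B" "snd p = snd q" for t p q using that by (simp add: BP_def B_def)
  have BPc: "\<not> BP Y t p q" if "snd p \<noteq> snd q" for t p q using that by (simp add: BP_def)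
  define A where "A = (r - 1, c)"
  define b where "b = (r, c)"
  have [simp]: "\<tau> b = i" "\<tau> A = j" "fst A = r - 1" "fst b = r" "snd A = c" "snd b = c"
    using assms(4) by (simp_all add: A_def b_def j_def)
  have [simp]: "\<delta> A = i" "\<delta> b = j"
    using s_A assms(4) by (simp_all add: \<delta>_def A_def b_def j_def)
  have [simp]: "\<delta> (succ A) = \<tau> (succ A)" "\<delta> (succ b) = \<tau> (succ b)"
    by (simp_all add: \<delta>_def A_def b_def \<sigma>_def succ_def)
  have AbB: "A \<in> B" "b \<in> B" using A Bb by (simp_all add: A_def b_def)
  have nBA: "succ b \<in> B \<longrightarrow> succ A \<in> B" using yl rlen r0 by (auto simp: succ_def inB A_def b_def)
  have S2: "ind (BP Y \<delta> x A) + ind (BP Y \<delta> x b) + ind (BP Y \<delta> A x) + ind (BP Y \<delta> b x)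
         = ind (BP Y \<tau> x A) + ind (BP Y \<tau> x b) + ind (BP Y \<tau> A x) + ind (BP Y \<tau> b x)"
    if x: "x \<in> B'" for x
  proof (cases "snd x = c")
    case False
    then show ?thesis using BPc[of x A] BPc[of A x] BPc[of x b] BPc[of b x] by simp
  next
    case True
    obtain \<rho> where xr: "x = (\<rho>, c)" using True by (cases x) auto
    have xB: "x \<in> B" and \<rho>: "\<rho> \<noteq> r - 1" "\<rho> \<noteq> r" using x xr by (auto simp: B'_def)
    have dx: "\<delta> x = \<tau> x" "\<delta> (succ x) = \<tau> (succ x)" using \<rho> xr by (auto simp: \<delta>_def \<sigma>_def succ_def)
    have sn: "snd x = snd A" "snd x = snd b" "snd A = snd x" "snd b = snd x" using True by simp_all
    note eqs = BPeq[OF xB AbB(1) sn(1)] BPeq[OF xB AbB(2) sn(2)] BPeq[OF AbB(1) xB sn(3)] BPeq[OF AbB(2) xB sn(4)]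
    have fx: "fst x = \<rho>" using xr by simp
    have kij: "\<tau> x \<noteq> i" "\<tau> x \<noteq> j" using inj xB AbB x unfolding inj_on_def B'_def A_def b_def
      by (metis DiffD2 insertCI \<open>\<tau> b = i\<close> \<open>\<tau> A = j\<close> A_def b_def)+
    have ij: "i \<noteq> j" using inj AbB AB unfolding inj_on_def A_def b_def
      by (metis \<open>\<tau> b = i\<close> \<open>\<tau> A = j\<close> A_def b_def)
    have d1: "succ A \<in> B \<and> succ b \<in> B \<longrightarrow> \<tau> (succ A) \<noteq> \<tau> (succ b)"
      using inj AB unfolding inj_on_def by (auto simp: A_def b_def succ_def)
    have d2: "succ A \<in> B \<and> succ x \<in> B \<longrightarrow> \<tau> (succ A) \<noteq> \<tau> (succ x)"
      using inj \<rho> xr unfolding inj_on_def by (auto simp: A_def succ_def)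
    have d3: "succ b \<in> B \<and> succ x \<in> B \<longrightarrow> \<tau> (succ b) \<noteq> \<tau> (succ x)"
      using inj \<rho> xr unfolding inj_on_def by (auto simp: b_def succ_def)
    have cc: "is_inversion Y \<tau> (min i j) (\<tau> x) \<noteq> is_inversion Y \<tau> (\<tau> x) (max i j)"
      if "min i j < \<tau> x" "\<tau> x < max i j" using c3'[of \<rho>] that xB xr by simp
    have h1: "pinv i r (succ b \<in> B) (\<tau> (succ b)) (\<tau> x) \<rho> (succ x \<in> B) (\<tau> (succ x)) \<noteq>
              pinv (\<tau> x) \<rho> (succ x \<in> B) (\<tau> (succ x)) j (r - 1) (succ A \<in> B) (\<tau> (succ A))"
      if "i < j" "i < \<tau> x" "\<tau> x < j"
      using cc that inv_box[OF inj[unfolded B_def], of b x] inv_box[OF inj[unfolded B_def], of x A]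
        eqs AbB xB fx unfolding B_def[symmetric] by (simp add: min_def max_def)
    have h2: "pinv j (r - 1) (succ A \<in> B) (\<tau> (succ A)) (\<tau> x) \<rho> (succ x \<in> B) (\<tau> (succ x)) \<noteq>
              pinv (\<tau> x) \<rho> (succ x \<in> B) (\<tau> (succ x)) i r (succ b \<in> B) (\<tau> (succ b))"
      if "j < i" "j < \<tau> x" "\<tau> x < i"
      using cc that inv_box[OF inj[unfolded B_def], of A x] inv_box[OF inj[unfolded B_def], of x b]
        eqs AbB xB fx unfolding B_def[symmetric] by (simp add: min_def max_def)
    show ?thesis
      unfolding eqs dx fx
      using per_z[OF r0 \<rho>(2) \<rho>(1) ij kij(1) kij(2) nBA d1 d2 d3 h1 h2] by simp
  qed
  have ij: "i \<noteq> j" using inj AbB AB unfolding inj_on_def A_def b_def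
    by (metis \<open>\<tau> b = i\<close> \<open>\<tau> A = j\<close> A_def b_def)
  have d1: "succ A \<in> B \<and> succ b \<in> B \<longrightarrow> \<tau> (succ A) \<noteq> \<tau> (succ b)"
    using inj AB unfolding inj_on_def by (auto simp: A_def b_def succ_def)
  have snAb: "snd A = snd b" "snd b = snd A" by simp_all
  have P3: "ind (BP Y \<delta> A b) + ind (BP Y \<delta> b A) + (ind (BP Y \<tau> A b) + ind (BP Y \<tau> b A)) = 1"
    unfolding BPeq[OF AbB snAb(1)] BPeq[OF AbB(2,1) snAb(2)]
    using pair_flip[OF r0 ij nBA d1] by simp
  have P4: "ind (BP Y \<tau> A b) + ind (BP Y \<tau> b A) = ind (is_inversion Y \<tau> (min i j) (max i j))"
  proof (cases "i < j")
    case True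
    then show ?thesis using inv_box[OF inj[unfolded B_def], of b A] AbB
      unfolding BPeq[OF AbB snAb(1)] BPeq[OF AbB(2,1) snAb(2)] B_def[symmetric]
      by (simp add: pinv_def ind_def)
  next
    case False
    then have "j < i" using ij by simp
    then show ?thesis using inv_box[OF inj[unfolded B_def], of A b] AbB
      unfolding BPeq[OF AbB snAb(1)] BPeq[OF AbB(2,1) snAb(2)] B_def[symmetric]
      by (simp add: pinv_def ind_def)
  qed
  have P0: "ind (BP Y t p p) = 0" for t p by (simp add: BP_def pinv_def ind_def)
  have injd: "inj_on \<delta> B"
    using inj s_B s_inv unfolding inj_on_def \<delta>_def by metis
  have S1: "(\<Sum>x\<in>B'. \<Sum>y\<in>B'. ind (BP Y \<delta> x y)) = (\<Sum>x\<in>B'. \<Sum>y\<in>B'. ind (BP Y \<tau> x y))"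
  proof -
    have "(\<Sum>x\<in>B'. \<Sum>y\<in>B'. ind (BP Y \<delta> x y)) = (\<Sum>x\<in>B'. \<Sum>y\<in>B'. ind (BP Y \<tau> (\<sigma> x) (\<sigma> y)))"
      using pw unfolding \<delta>_def by simp
    also have "\<dots> = (\<Sum>x\<in>B'. \<Sum>y\<in>B'. ind (BP Y \<tau> (\<sigma> x) y))"
      by (rule sum.cong[OF refl], rule sum.reindex_bij_betw[OF s_bij])
    also have "\<dots> = (\<Sum>x\<in>B'. \<Sum>y\<in>B'. ind (BP Y \<tau> x y))"
      by (rule sum.reindex_bij_betw[OF s_bij, where g="\<lambda>x. \<Sum>y\<in>B'. ind (BP Y \<tau> x y)"])
    finally show ?thesis .
  qed
  have S2s: "(\<Sum>x\<in>B'. ind (BP Y \<delta> x A) + ind (BP Y \<delta> x b) + ind (BP Y \<delta> A x) + ind (BP Y \<delta> b x))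
     = (\<Sum>x\<in>B'. ind (BP Y \<tau> x A) + ind (BP Y \<tau> x b) + ind (BP Y \<tau> A x) + ind (BP Y \<tau> b x))"
    using S2 by (rule sum.cong[OF refl])
  have B'eq: "B - {A, b} = B'" by (simp add: B'_def A_def b_def)
  have Ab: "A \<noteq> b" using AB by (simp add: A_def b_def)
  have Nd: "n_inv Y (delta Y i \<tau>) = (\<Sum>x\<in>B'. \<Sum>y\<in>B'. ind (BP Y \<delta> x y))
     + (\<Sum>x\<in>B'. ind (BP Y \<delta> x A) + ind (BP Y \<delta> x b) + ind (BP Y \<delta> A x) + ind (BP Y \<delta> b x))
     + (ind (BP Y \<delta> A b) + ind (BP Y \<delta> b A))"
    unfolding dl \<delta>_def[symmetric] ninv_sum[OF injd[unfolded B_def] fin[unfolded B_def]]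
    using sum_split[OF fin[unfolded B_def] AbB[unfolded B_def] Ab, of "\<lambda>x y. ind (BP Y \<delta> x y)"]
    unfolding B_def[symmetric] B'eq P0 by simp
  have Nt: "n_inv Y \<tau> = (\<Sum>x\<in>B'. \<Sum>y\<in>B'. ind (BP Y \<tau> x y))
     + (\<Sum>x\<in>B'. ind (BP Y \<tau> x A) + ind (BP Y \<tau> x b) + ind (BP Y \<tau> A x) + ind (BP Y \<tau> b x))
     + (ind (BP Y \<tau> A b) + ind (BP Y \<tau> b A))"
    unfolding ninv_sum[OF inj[unfolded B_def] fin[unfolded B_def]]
    using sum_split[OF fin[unfolded B_def] AbB[unfolded B_def] Ab, of "\<lambda>x y. ind (BP Y \<tau> x y)"]
    unfolding B_def[symmetric] B'eq P0 by simp
  show ?thesis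
    unfolding j_def[symmetric] using Nd Nt S1 S2s P3 P4 by (simp add: ind_def split: if_splits)
qed
end
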